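(* Let $\gamma$ be a gauge on $\mathbb{R}^d$ with skewness $\sigma$ and $(D,w)$ a finite positively weighted set with total weight $w_D$. If $a\in\mathrm{CL}_\gamma(D,w)$, then $\mathrm{FW}_\gamma\big((D,w)+(a,w_D/\sigma)\big)=\{a\}$.
   Context: A gauge $\gamma$ on $\mathbb{R}^d$ is the Minkowski functional of a convex compact set $B_\gamma$ with the origin in its interior (not necessarily symmetric); its skewness is $\sigma=\sup_{x\ne0}\gamma(x)/\gamma(-x)$. $\mathrm{FW}_\gamma(S,u)$ is the set of minimizers of $x\mapsto\sum_{s\in S}u_s\gamma(x-s)$. $(D,w)+(C,v)$ denotes $D\cup C$ with weights added at common points; $(a,t)$ denotes the single point $a$ with weight $t$. The contamination locus is $\mathrm{CL}_\gamma(D,w)=\bigcup\mathrm{FW}_\gamma((D,w)+(C,v))$, the union over all nonempty finite positively weighted sets $(C,v)$ with $\sigma v_C<w_D$. *)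

theory Defs
  imports "HOL-Analysis.Analysis"
begin

definition gauge_set :: "'a::euclidean_space set \<Rightarrow> bool" where
  "gauge_set B \<longleftrightarrow> convex B \<and> compact B \<and> 0 \<in> interior B"

definition minkowski_gauge :: "'a::euclidean_space set \<Rightarrow> 'a \<Rightarrow> real" where
  "minkowski_gauge B x = Inf {t. 0 \<le> t \<and> x \<in> (\<lambda>y. t *\<^sub>R y) ` B}"

definition skewness :: "('a::euclidean_space \<Rightarrow> real) \<Rightarrow> real" where
  "skewness \<gamma> = Sup {\<gamma> x / \<gamma> (- x) | x. x \<noteq> 0}"

definition FW :: "('a::euclidean_space \<Rightarrow> real) \<Rightarrow> 'a set \<Rightarrow> ('a \<Rightarrow> real) \<Rightarrow> 'a set" where
  "FW \<gamma> S u = {x. \<forall>y. (\<Sum>s\<in>S. u s * \<gamma> (x - s)) \<le> (\<Sum>s\<in>S. u s * \<gamma> (y - s))}"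

definition wadd :: "'a set \<times> ('a \<Rightarrow> real) \<Rightarrow> 'a set \<times> ('a \<Rightarrow> real) \<Rightarrow> 'a set \<times> ('a \<Rightarrow> real)" where
  "wadd Dw Cv = (fst Dw \<union> fst Cv,
     \<lambda>x. (if x \<in> fst Dw then snd Dw x else 0) + (if x \<in> fst Cv then snd Cv x else 0))"

definition CL :: "('a::euclidean_space \<Rightarrow> real) \<Rightarrow> 'a set \<Rightarrow> ('a \<Rightarrow> real) \<Rightarrow> 'a set" where
  "CL \<gamma> D w = \<Union> {FW \<gamma> (fst (wadd (D, w) (C, v))) (snd (wadd (D, w) (C, v))) | C v.
      finite C \<and> C \<noteq> {} \<and> (\<forall>c\<in>C. 0 < v c) \<and> skewness \<gamma> * sum v C < sum w D}"

end

theory Submission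
  imports Defs
begin

lemma gauge_radii:
  assumes "gauge_set (B::'a::euclidean_space set)"
  obtains r R where "r > 0" "R > 0" "cball 0 r \<subseteq> B" "\<forall>x\<in>B. norm x \<le> R"
proof -
  from assms have "0 \<in> interior B" "compact B" by (auto simp: gauge_set_def)
  then obtain r where r: "r > 0" "cball 0 r \<subseteq> B" using mem_interior_cball by blast
  from \<open>compact B\<close> have "bounded B" by (rule compact_imp_bounded)
  then obtain R where "R > 0" "\<forall>x\<in>B. norm x \<le> R" using bounded_pos by blast
  with r that show ?thesis by blast
qed

lemma gauge_facts:
  assumes g: "gauge_set (B::'a::euclidean_space set)"
  shows "\<exists>r R. r > 0 \<and> R > 0 \<and> (\<forall>x. norm x / R \<le> minkowski_gauge B x \<and> minkowski_gauge B x \<le> norm x / r)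
     \<and> (\<forall>x y. minkowski_gauge B (x + y) \<le> minkowski_gauge B x + minkowski_gauge B y)"
proof -
  obtain r R where r: "r > 0" "R > 0" "cball 0 r \<subseteq> B" "\<forall>x\<in>B. norm x \<le> R"
    using gauge_radii[OF g] by blast
  have cvx: "convex B" using g by (auto simp: gauge_set_def)
  have B0: "0 \<in> B" using r by auto
  define T where "T x = {t. 0 \<le> t \<and> x \<in> (\<lambda>y. t *\<^sub>R y) ` B}" for x :: 'a
  have mg: "minkowski_gauge B x = Inf (T x)" for x unfolding minkowski_gauge_def T_def by simp
  have bdd: "bdd_below (T x)" for x unfolding T_def bdd_below_def by auto
  have inT: "norm x / r \<in> T x" for x
  proof (cases "x = 0")
    case True
    then show ?thesis unfolding T_def using B0 by (auto intro!: image_eqI[of _ _ 0])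
  next
    case False
    let ?t = "norm x / r"
    have tp: "?t > 0" using False r by auto
    have "x = ?t *\<^sub>R (x /\<^sub>R ?t)" using tp r(1) by simp
    moreover have "x /\<^sub>R ?t \<in> B"
    proof -
      have "norm (x /\<^sub>R ?t) = r" using tp False r(1) by (simp add: field_simps)
      then show ?thesis using r(3) by auto
    qed
    ultimately show ?thesis unfolding T_def using tp by (auto intro!: image_eqI)
  qed
  have ne: "T x \<noteq> {}" for x using inT by blast
  have up: "minkowski_gauge B x \<le> norm x / r" for x
    unfolding mg by (rule cInf_lower[OF inT bdd])
  have lo: "norm x / R \<le> minkowski_gauge B x" for x
    unfolding mg
  proof (rule cInf_greatest[OF ne])
    fix t assume "t \<in> T x"
    then obtain y where y: "t \<ge> 0" "y \<in> B" "x = t *\<^sub>R y" unfolding T_def by auto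
    have "norm x = t * norm y" using y by simp
    also have "\<dots> \<le> t * R" using y r(4) by (auto intro: mult_left_mono)
    finally show "norm x / R \<le> t" using r(2) by (simp add: divide_le_eq)
  qed
  have plus: "s + t \<in> T (x + y)" if hs: "s \<in> T x" and ht: "t \<in> T y" for s t x y
  proof -
    obtain x1 where x1: "s \<ge> 0" "x1 \<in> B" "x = s *\<^sub>R x1" using hs by (auto simp: T_def)
    obtain y1 where y1: "t \<ge> 0" "y1 \<in> B" "y = t *\<^sub>R y1" using ht by (auto simp: T_def)
    show ?thesis
    proof (cases "s + t = 0")
      case True
      then have "s = 0" "t = 0" using x1 y1 by auto
      then show ?thesis unfolding T_def using x1 y1 B0 by (auto intro!: image_eqI[of _ _ 0])
    next
      case False
      then have st: "s + t > 0" using x1 y1 by auto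
      let ?z = "(s / (s + t)) *\<^sub>R x1 + (t / (s + t)) *\<^sub>R y1"
      have "?z \<in> B"
        using cvx x1 y1 st unfolding convex_def
        by (auto simp: add_divide_distrib[symmetric])
      moreover have "x + y = (s + t) *\<^sub>R ?z"
        using st x1 y1 by (simp add: scaleR_add_right)
      ultimately show ?thesis unfolding T_def using st by auto
    qed
  qed
  have sub: "minkowski_gauge B (x + y) \<le> minkowski_gauge B x + minkowski_gauge B y" for x y
  proof -
    have "minkowski_gauge B (x + y) - t \<le> minkowski_gauge B x" if t: "t \<in> T y" for t
    proof -
      have "minkowski_gauge B (x + y) - t \<le> Inf (T x)"
      proof (rule cInf_greatest[OF ne])
        fix s assume "s \<in> T x"
        then have "minkowski_gauge B (x + y) \<le> s + t" unfolding mg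
          using plus t bdd by (intro cInf_lower) auto
        then show "minkowski_gauge B (x + y) - t \<le> s" by simp
      qed
      then show ?thesis by (simp add: mg)
    qed
    then have "minkowski_gauge B (x + y) - minkowski_gauge B x \<le> Inf (T y)"
      by (intro cInf_greatest[OF ne]) force
    then show ?thesis by (simp add: mg)
  qed
  show ?thesis using r(1,2) up lo sub by blast
qed


lemma skew_pos:
  assumes g: "gauge_set (B::'a::euclidean_space set)"
  shows "skewness (minkowski_gauge B) > 0"
proof -
  obtain r R where rR: "r > 0" "R > 0"
    "\<And>x. norm x / R \<le> minkowski_gauge B x \<and> minkowski_gauge B x \<le> norm x / r"
    using gauge_facts[OF g] by blast
  let ?g = "minkowski_gauge B"
  let ?S = "{?g x / ?g (- x) | x. x \<noteq> (0::'a)}"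
  have pos: "?g x / ?g (- x) > 0" if "x \<noteq> 0" for x
  proof -
    have "?g x \<ge> norm x / R" "?g (-x) \<ge> norm x / R" using rR(3)[of x] rR(3)[of "-x"] by auto
    moreover have "norm x / R > 0" using that rR by auto
    ultimately show ?thesis by (metis divide_pos_pos order_less_le_trans)
  qed
  have bd: "?g x / ?g (- x) \<le> R / r" if "x \<noteq> 0" for x
  proof -
    have a: "?g x \<le> norm x / r" "?g (-x) \<ge> norm x / R" using rR(3)[of x] rR(3)[of "-x"] by auto
    have n: "norm x / R > 0" using that rR by auto
    have "?g x / ?g (- x) \<le> (norm x / r) / (norm x / R)"
      using a n pos[OF that] by (meson divide_mono order_less_le_trans less_imp_le zero_le_divide_iff
          norm_ge_zero rR(1) frac_le)
    also have "\<dots> = R / r" using that rR by (simp add: field_simps)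
    finally show ?thesis .
  qed
  obtain i :: 'a where i: "i \<in> Basis" using nonempty_Basis by blast
  then have i0: "i \<noteq> 0" by (auto simp: nonzero_Basis)
  have "bdd_above ?S" unfolding bdd_above_def using bd by blast
  then have "?g i / ?g (- i) \<le> Sup ?S" using i0 by (intro cSup_upper) auto
  then show ?thesis unfolding skewness_def using pos[OF i0] by linarith
qed

lemma wsum:
  assumes "finite D" "finite C"
  shows "(\<Sum>s\<in>fst (wadd (D, w) (C, v)). snd (wadd (D, w) (C, v)) s * h s)
       = (\<Sum>s\<in>D. w s * h s) + (\<Sum>s\<in>C. v s * h s)"
proof -
  have "(\<Sum>s\<in>fst (wadd (D, w) (C, v)). snd (wadd (D, w) (C, v)) s * h s)
     = (\<Sum>s\<in>D \<union> C. (if s \<in> D then w s * h s else 0)) + (\<Sum>s\<in>D \<union> C. (if s \<in> C then v s * h s else 0))"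
    unfolding wadd_def sum.distrib[symmetric] by (intro sum.cong) (auto simp: distrib_right)
  also have "(\<Sum>s\<in>D \<union> C. (if s \<in> D then w s * h s else 0)) = (\<Sum>s\<in>D. w s * h s)"
    using assms by (simp add: sum.If_cases Int_absorb2)
  also have "(\<Sum>s\<in>D \<union> C. (if s \<in> C then v s * h s else 0)) = (\<Sum>s\<in>C. v s * h s)"
    using assms by (simp add: sum.If_cases Int_absorb1)
  finally show ?thesis .
qed


theorem mainTheorem20:
  fixes B :: "'a::euclidean_space set" and D :: "'a set" and w :: "'a \<Rightarrow> real" and a :: 'a
  assumes "gauge_set B"
    and "finite D" and "\<forall>x\<in>D. 0 < w x"
    and "a \<in> CL (minkowski_gauge B) D w"
  shows "FW (minkowski_gauge B)
           (fst (wadd (D, w) ({a}, \<lambda>_. sum w D / skewness (minkowski_gauge B))))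
           (snd (wadd (D, w) ({a}, \<lambda>_. sum w D / skewness (minkowski_gauge B)))) = {a}"
proof -
  let ?g = "minkowski_gauge B"
  let ?\<sigma> = "skewness ?g"
  let ?k = "sum w D / ?\<sigma>"
  obtain r R where rR: "r > 0" "R > 0"
    "\<And>x. norm x / R \<le> ?g x \<and> ?g x \<le> norm x / r"
    and sub: "\<And>x y. ?g (x + y) \<le> ?g x + ?g y"
    using gauge_facts[OF assms(1)] by blast
  have sp: "?\<sigma> > 0" by (rule skew_pos[OF assms(1)])
  have g0: "?g 0 = 0" using rR(3)[of 0] by auto
  have gpos: "?g x > 0" if "x \<noteq> 0" for x
    using rR(3)[of x] that rR(2) by (meson divide_pos_pos order_less_le_trans zero_less_norm_iff)
  from assms(4) obtain C v where Cv: "finite C" "C \<noteq> {}" "\<forall>c\<in>C. 0 < v c"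
      "?\<sigma> * sum v C < sum w D"
      and aFW: "a \<in> FW ?g (fst (wadd (D, w) (C, v))) (snd (wadd (D, w) (C, v)))"
    unfolding CL_def by blast
  define F where "F x = (\<Sum>s\<in>D. w s * ?g (x - s))" for x
  have vk: "sum v C < ?k" using Cv(4) sp by (simp add: field_simps mult.commute)
  have G: "(\<Sum>s\<in>fst (wadd (D, w) ({a}, \<lambda>_. ?k)). snd (wadd (D, w) ({a}, \<lambda>_. ?k)) s * ?g (x - s))
      = F x + ?k * ?g (x - a)" for x
    using wsum[OF assms(2), of "{a}" w "\<lambda>_. ?k" "\<lambda>s. ?g (x - s)"] by (simp add: F_def)
  have key: "F a < F y + ?k * ?g (y - a)" if "y \<noteq> a" for y
  proof -
    have "F a + (\<Sum>c\<in>C. v c * ?g (a - c)) \<le> F y + (\<Sum>c\<in>C. v c * ?g (y - c))"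
    proof -
      from aFW have "(\<Sum>s\<in>fst (wadd (D, w) (C, v)). snd (wadd (D, w) (C, v)) s * ?g (a - s))
         \<le> (\<Sum>s\<in>fst (wadd (D, w) (C, v)). snd (wadd (D, w) (C, v)) s * ?g (y - s))"
        unfolding FW_def by blast
      then show ?thesis unfolding F_def wsum[OF assms(2) Cv(1)] .
    qed
    also have "(\<Sum>c\<in>C. v c * ?g (y - c)) \<le> (\<Sum>c\<in>C. v c * ?g (y - a) + v c * ?g (a - c))"
    proof (rule sum_mono)
      fix c assume "c \<in> C"
      have "?g (y - c) \<le> ?g (y - a) + ?g (a - c)" using sub[of "y - a" "a - c"] by simp
      then show "v c * ?g (y - c) \<le> v c * ?g (y - a) + v c * ?g (a - c)"
        using Cv(3) \<open>c \<in> C\<close> by (simp add: distrib_left[symmetric] mult_left_mono less_imp_le)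
    qed
    finally have "F a \<le> F y + sum v C * ?g (y - a)"
      by (simp add: sum.distrib sum_distrib_right)
    also have "sum v C * ?g (y - a) < ?k * ?g (y - a)"
      using vk gpos[of "y - a"] that by (intro mult_strict_right_mono) auto
    finally show ?thesis by simp
  qed
  show ?thesis
  proof
    show "{a} \<subseteq> FW ?g (fst (wadd (D, w) ({a}, \<lambda>_. ?k))) (snd (wadd (D, w) ({a}, \<lambda>_. ?k)))"
    proof -
      have "F a + ?k * ?g (a - a) \<le> F y + ?k * ?g (y - a)" for y
      proof (cases "y = a")
        case False
        then show ?thesis using key[OF False] g0 by simp
      qed simp
      then show ?thesis unfolding FW_def G by blast
    qed
    show "FW ?g (fst (wadd (D, w) ({a}, \<lambda>_. ?k))) (snd (wadd (D, w) ({a}, \<lambda>_. ?k))) \<subseteq> {a}"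
    proof
      fix x assume "x \<in> FW ?g (fst (wadd (D, w) ({a}, \<lambda>_. ?k))) (snd (wadd (D, w) ({a}, \<lambda>_. ?k)))"
      then have "F x + ?k * ?g (x - a) \<le> F a + ?k * ?g (a - a)" unfolding FW_def G by blast
      then show "x \<in> {a}" using key[of x] g0 by (cases "x = a") auto
    qed
  qed
qed

end
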